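(* Fix integers $k\ge 3$ and $r\ge 1$. For integers $a\ge 0$, $0\le b\le r$ and a finite list $L=[l_1,\dots,l_t]$ ($t\ge 0$) of positive integers, let $A(r,a,b,L)$ be the number of words $w$ over the positive integers that contain exactly $r$ copies of each of the letters $1,\dots,a$, exactly $b$ copies of the letter $a+1$, exactly $l_j$ copies of the letter $a+1+j$ for $1\le j\le t$, and no other letters, such that both $w$ and the word $(a+1)w$ (obtained by prepending the letter $a+1$) avoid both patterns $123$ and $1k(k-1)\cdots 2$. (The empty word is counted.) For a list $L$, let $R(L)$ be the list obtained by deleting all entries equal to $0$. Suppose $b\ge 1$ and $t\le k-2$. Then $$A(r,a,b,L)=\sum_{i=\max(1,\ a-(k-2)+t+1)}^{a} A\big(r,\ i-1,\ r-1,\ [\underbrace{r,\dots,r}_{a-i\text{ copies}},\ b,\ l_1,\dots,l_t]\big)\ +\ A(r,a,b-1,L)\ +\ \delta_{t\ge 1}\,A\big(r,a,b,R([l_1,\dots,l_{t-1},l_t-1])\big),$$ where the sum is empty if its lower limit exceeds $a$, and $\delta_{t\ge1}$ equals $1$ if $t\ge 1$ and $0$ if $t=0$.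
   Context: A word $w_1\cdots w_m$ over the positive integers contains a pattern $p_1\cdots p_k$ if there are indices $i_1<\dots<i_k$ such that for all $r,s$: $w_{i_r}<w_{i_s}\iff p_r<p_s$ and $w_{i_r}>w_{i_s}\iff p_r>p_s$; otherwise it avoids it. The pattern $1k(k-1)\cdots 2$ is the permutation of length $k$ whose first entry is $1$ followed by $k,k-1,\dots,2$ in decreasing order (for $k=3$ it is $132$). *)

theory Defs
  imports Main
begin

definition contains :: "nat list \<Rightarrow> nat list \<Rightarrow> bool" where
  "contains w p \<longleftrightarrow> (\<exists>is :: nat list.
      length is = length p \<and> sorted_wrt (<) is \<and> (\<forall>i\<in>set is. i < length w) \<and>
      (\<forall>r < length p. \<forall>s < length p.
         (w ! (is ! r) < w ! (is ! s) \<longleftrightarrow> p ! r < p ! s) \<and>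
         (w ! (is ! r) > w ! (is ! s) \<longleftrightarrow> p ! r > p ! s)))"

definition avoids :: "nat list \<Rightarrow> nat list \<Rightarrow> bool" where
  "avoids w p \<longleftrightarrow> \<not> contains w p"

definition pat_1k :: "nat \<Rightarrow> nat list" where
  "pat_1k k = 1 # rev [2..<Suc k]"

definition mult :: "nat \<Rightarrow> nat \<Rightarrow> nat \<Rightarrow> nat list \<Rightarrow> nat \<Rightarrow> nat" where
  "mult r a b L c =
     (if 1 \<le> c \<and> c \<le> a then r
      else if c = a + 1 then b
      else if a + 2 \<le> c \<and> c \<le> a + 1 + length L then L ! (c - (a + 2))
      else 0)"

definition good_words :: "nat \<Rightarrow> nat \<Rightarrow> nat \<Rightarrow> nat \<Rightarrow> nat list \<Rightarrow> nat list set" where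
  "good_words k r a b L = {w. (\<forall>c. count_list w c = mult r a b L c) \<and>
      avoids w [1,2,3] \<and> avoids w (pat_1k k) \<and>
      avoids ((a + 1) # w) [1,2,3] \<and> avoids ((a + 1) # w) (pat_1k k)}"

definition A :: "nat \<Rightarrow> nat \<Rightarrow> nat \<Rightarrow> nat \<Rightarrow> nat list \<Rightarrow> nat" where
  "A k r a b L = card (good_words k r a b L)"

definition Rdel :: "nat list \<Rightarrow> nat list" where
  "Rdel L = filter (\<lambda>x. x \<noteq> 0) L"

end

theory Submission
  imports Defs
begin


lemma subseqs_Cons_set: "set (subseqs (x#w)) = Cons x ` set (subseqs w) \<union> set (subseqs w)"
  by (simp add: Let_def)

lemma sorted_wrt_Suc_pred:
  assumes "\<forall>i\<in>set ix. 0 < i"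
  shows "ix = map Suc (map (\<lambda>i. i - 1) ix)"
  using assms by (induction ix) auto

lemma subseqs_idx:
  "q \<in> set (subseqs w) \<longleftrightarrow> (\<exists>ix. sorted_wrt (<) ix \<and> (\<forall>i\<in>set ix. i < length w) \<and> q = map ((!) w) ix)"
proof (induction w arbitrary: q)
  case Nil
  then show ?case by auto
next
  case (Cons x w)
  show ?case
  proof
    assume "q \<in> set (subseqs (x#w))"
    then consider q' where "q = x # q'" "q' \<in> set (subseqs w)" | "q \<in> set (subseqs w)"
      unfolding subseqs_Cons_set by blast
    then show "\<exists>ix. sorted_wrt (<) ix \<and> (\<forall>i\<in>set ix. i < length (x#w)) \<and> q = map ((!) (x#w)) ix"
    proof cases
      case 1
      then obtain ix where "sorted_wrt (<) ix" "\<forall>i\<in>set ix. i < length w" "q' = map ((!) w) ix"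
        using Cons.IH by blast
      then show ?thesis using 1
        by (intro exI[of _ "0 # map Suc ix"]) (auto simp: sorted_wrt_map)
    next
      case 2
      then obtain ix where "sorted_wrt (<) ix" "\<forall>i\<in>set ix. i < length w" "q = map ((!) w) ix"
        using Cons.IH by blast
      then show ?thesis
        by (intro exI[of _ "map Suc ix"]) (auto simp: sorted_wrt_map)
    qed
  next
    assume "\<exists>ix. sorted_wrt (<) ix \<and> (\<forall>i\<in>set ix. i < length (x#w)) \<and> q = map ((!) (x#w)) ix"
    then obtain ix where ix: "sorted_wrt (<) ix" "\<forall>i\<in>set ix. i < length (x#w)" "q = map ((!) (x#w)) ix"
      by blast
    show "q \<in> set (subseqs (x#w))"
    proof (cases ix)
      case Nil
      then have "q = []" using ix by simp
      moreover have "[] \<in> set (subseqs w)" using Cons.IH[of "[]"] by auto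
      ultimately show ?thesis unfolding subseqs_Cons_set by blast
    next
      case (Cons j js)
      show ?thesis
      proof (cases "j = 0")
        case True
        have pos: "\<forall>i\<in>set js. 0 < i" using ix(1) Cons True by auto
        define js' where "js' = map (\<lambda>i. i - 1) js"
        have jsj: "js = map Suc js'" using sorted_wrt_Suc_pred[OF pos] js'_def by simp
        have "sorted_wrt (<) js'" using ix(1) Cons jsj by (simp add: sorted_wrt_map)
        moreover have "\<forall>i\<in>set js'. i < length w" using ix(2) Cons jsj by auto
        ultimately have "map ((!) w) js' \<in> set (subseqs w)" using Cons.IH by blast
        moreover have "q = x # map ((!) w) js'" using ix(3) Cons True jsj by simp
        ultimately show ?thesis unfolding subseqs_Cons_set by blast
      next
        case False
        have pos: "\<forall>i\<in>set ix. 0 < i" using ix(1) Cons False by auto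
        define js' where "js' = map (\<lambda>i. i - 1) ix"
        have jsj: "ix = map Suc js'" using sorted_wrt_Suc_pred[OF pos] js'_def by simp
        have "sorted_wrt (<) js'" using ix(1) jsj by (simp add: sorted_wrt_map)
        moreover have "\<forall>i\<in>set js'. i < length w" using ix(2) jsj by auto
        ultimately have "map ((!) w) js' \<in> set (subseqs w)" using Cons.IH by blast
        moreover have "q = map ((!) w) js'" using ix(3) jsj by simp
        ultimately show ?thesis unfolding subseqs_Cons_set by blast
      qed
    qed
  qed
qed

definition iso :: "nat list \<Rightarrow> nat list \<Rightarrow> bool" where
  "iso q p \<longleftrightarrow> length q = length p \<and> (\<forall>r<length p. \<forall>s<length p.
         (q ! r < q ! s \<longleftrightarrow> p ! r < p ! s) \<and> (q ! r > q ! s \<longleftrightarrow> p ! r > p ! s))"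

lemma contains_subseqs: "contains w p \<longleftrightarrow> (\<exists>q\<in>set (subseqs w). iso q p)"
proof
  assume "contains w p"
  then obtain ix where ix: "length ix = length p" "sorted_wrt (<) ix" "\<forall>i\<in>set ix. i < length w"
    "\<forall>r < length p. \<forall>s < length p.
         (w ! (ix ! r) < w ! (ix ! s) \<longleftrightarrow> p ! r < p ! s) \<and>
         (w ! (ix ! r) > w ! (ix ! s) \<longleftrightarrow> p ! r > p ! s)"
    unfolding contains_def by blast
  have "map ((!) w) ix \<in> set (subseqs w)" using ix subseqs_idx by blast
  moreover have "iso (map ((!) w) ix) p" using ix unfolding iso_def by auto
  ultimately show "\<exists>q\<in>set (subseqs w). iso q p" by blast
next
  assume "\<exists>q\<in>set (subseqs w). iso q p"
  then obtain q where q: "q \<in> set (subseqs w)" "iso q p" by blast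
  then obtain ix where ix: "sorted_wrt (<) ix" "\<forall>i\<in>set ix. i < length w" "q = map ((!) w) ix"
    using subseqs_idx by blast
  show "contains w p" unfolding contains_def
    using ix q(2) unfolding iso_def by (intro exI[of _ ix]) auto
qed


lemma nil_subseqs: "[] \<in> set (subseqs w)"
  by (induction w) (auto simp: Let_def)

lemma subseqs_mono_Cons: "q \<in> set (subseqs w) \<Longrightarrow> q \<in> set (subseqs (x#w))"
  by (simp add: Let_def)

lemma subseqs_set: "q \<in> set (subseqs w) \<Longrightarrow> set q \<subseteq> set w"
  by (induction w arbitrary: q) (auto simp: Let_def, blast+)

lemma L1: assumes "contains w p" shows "contains (x#w) p"
proof -
  obtain q where q: "q \<in> set (subseqs w)" "iso q p" using assms contains_subseqs by blast
  from q(1) have "q \<in> set (subseqs (x#w))" by (rule subseqs_mono_Cons)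
  with q(2) show ?thesis unfolding contains_subseqs by blast
qed

lemma subseqs_mono2: assumes "q \<in> set (subseqs (u#w))" shows "q \<in> set (subseqs (u#m#w))"
proof -
  consider q' where "q = u#q'" "q' \<in> set (subseqs w)" | "q \<in> set (subseqs w)"
    using assms unfolding subseqs_Cons_set by blast
  then show ?thesis
  proof cases
    case 1
    from 1(2) have "q' \<in> set (subseqs (m#w))" by (rule subseqs_mono_Cons)
    then show ?thesis using 1 unfolding subseqs_Cons_set[of u] by blast
  next
    case 2
    then show ?thesis by (intro subseqs_mono_Cons)
  qed
qed

lemma L1b: assumes "contains (u#w) p" shows "contains (u#m#w) p"
proof -
  obtain q where q: "q \<in> set (subseqs (u#w))" "iso q p" using assms contains_subseqs by blast
  from q(1) have "q \<in> set (subseqs (u#m#w))" by (rule subseqs_mono2)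
  with q(2) show ?thesis unfolding contains_subseqs by blast
qed

lemma iso_replace_head:
  assumes "iso (x#q') p" "\<forall>s. 0 < s \<and> s < length p \<longrightarrow> p!0 < p!s" "y \<le> x"
  shows "iso (y#q') p"
  unfolding iso_def
proof (rule conjI)
  show "length (y#q') = length p" using assms(1) by (simp add: iso_def)
  show "\<forall>r<length p. \<forall>s<length p. ((y#q') ! r < (y#q') ! s \<longleftrightarrow> p ! r < p ! s) \<and> ((y#q') ! r > (y#q') ! s \<longleftrightarrow> p ! r > p ! s)"
  proof (intro allI impI)
  fix r s assume rs: "r < length p" "s < length p"
  have A: "\<And>r s. r < length p \<Longrightarrow> s < length p \<Longrightarrow>
     ((x#q') ! r < (x#q') ! s \<longleftrightarrow> p ! r < p ! s) \<and> ((x#q') ! r > (x#q') ! s \<longleftrightarrow> p ! r > p ! s)"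
    using assms(1) unfolding iso_def by blast
  have B: "\<And>s. 0 < s \<Longrightarrow> s < length p \<Longrightarrow> x < (x#q')!s"
  proof -
    fix s assume "0 < s" "s < length p"
    then have "0 < length p" by linarith
    then show "x < (x#q')!s" using A[of 0 s] assms(2) \<open>0 < s\<close> \<open>s < length p\<close> by auto
  qed
  have C: "\<And>s. 0 < s \<Longrightarrow> (y#q')!s = (x#q')!s" by (simp add: nth_Cons')
  show "((y#q') ! r < (y#q') ! s \<longleftrightarrow> p ! r < p ! s) \<and> ((y#q') ! r > (y#q') ! s \<longleftrightarrow> p ! r > p ! s)"
  proof (cases "r = 0")
    case True
    show ?thesis
    proof (cases "s = 0")
      case True with \<open>r = 0\<close> show ?thesis by simp
    next
      case False
      then have "x < (x#q')!s" "p!0 < p!s" using B rs assms(2) by auto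
      then show ?thesis using \<open>r = 0\<close> C[of s] False assms(3) by auto
    qed
  next
    case False
    show ?thesis
    proof (cases "s = 0")
      case True
      then have "x < (x#q')!r" "p!0 < p!r" using B rs assms(2) False by auto
      then show ?thesis using \<open>s = 0\<close> C[of r] False assms(3) by auto
    next
      case False
      then show ?thesis using A[OF rs] C[of r] C[of s] \<open>r \<noteq> 0\<close> by auto
    qed
  qed
  qed
qed

lemma iso_len: "iso q p \<Longrightarrow> length q = length p" by (simp add: iso_def)

lemma iso_at: "iso q p \<Longrightarrow> r < length p \<Longrightarrow> s < length p \<Longrightarrow>
   (q ! r < q ! s \<longleftrightarrow> p ! r < p ! s) \<and> (q ! r > q ! s \<longleftrightarrow> p ! r > p ! s)"
  by (simp add: iso_def)

lemma L2:
  assumes "\<forall>s. 0 < s \<and> s < length p \<longrightarrow> p!0 < p!s" "y \<le> x" "contains (x#y#w) p"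
  shows "contains (y#w) p"
proof -
  obtain q where q: "q \<in> set (subseqs (x#y#w))" "iso q p" using assms(3) contains_subseqs by blast
  consider q' where "q = x#q'" "q' \<in> set (subseqs (y#w))" | "q \<in> set (subseqs (y#w))"
    using q(1) unfolding subseqs_Cons_set by blast
  then show ?thesis
  proof cases
    case 1
    then consider q'' where "q' = y#q''" "q'' \<in> set (subseqs w)" | "q' \<in> set (subseqs w)"
      unfolding subseqs_Cons_set by blast
    then show ?thesis
    proof cases
      case a: 1
      have "length p \<ge> 2" using iso_len[OF q(2)] 1 a by simp
      then have "p!0 < p!1" using assms(1) by auto
      moreover have "0 < length p" "1 < length p" using \<open>length p \<ge> 2\<close> by auto
      ultimately have "q!0 < q!1" using iso_at[OF q(2), of 0 1] by blast
      then show ?thesis using 1 a assms(2) by simp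
    next
      case a: 2
      have "iso (y#q') p" using iso_replace_head[of x q' p y] q(2) 1 assms(1,2) by blast
      moreover have "y#q' \<in> set (subseqs (y#w))" using a unfolding subseqs_Cons_set by blast
      ultimately show ?thesis using contains_subseqs by blast
    qed
  next
    case 2
    then show ?thesis using q(2) contains_subseqs by blast
  qed
qed


lemma iso123: "iso q [1,2,3] \<longleftrightarrow> (\<exists>a b c. q = [a,b,c] \<and> a < b \<and> b < c)"
proof
  assume h: "iso q [1,2,3]"
  then have "length q = 3" by (simp add: iso_def)
  then obtain a b c where q: "q = [a,b,c]"
    by (auto simp: numeral_3_eq_3 length_Suc_conv)
  have "a < b" using iso_at[OF h, of 0 1] q by simp
  moreover have "b < c" using iso_at[OF h, of 1 2] q by simp
  ultimately show "\<exists>a b c. q = [a,b,c] \<and> a < b \<and> b < c" using q by blast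
next
  assume "\<exists>a b c. q = [a,b,c] \<and> a < b \<and> b < c"
  then obtain a b c where q: "q = [a,b,c]" "a < b" "b < c" by blast
  show "iso q [1,2,3]" unfolding iso_def
  proof (rule conjI)
    show "length q = length [1::nat,2,3]" using q by simp
    show "\<forall>r<length [1::nat,2,3]. \<forall>s<length [1::nat,2,3]. (q ! r < q ! s \<longleftrightarrow> [1::nat,2,3] ! r < [1::nat,2,3] ! s) \<and>
         (q ! r > q ! s \<longleftrightarrow> [1::nat,2,3] ! r > [1::nat,2,3] ! s)"
    proof (intro allI impI)
      fix r s :: nat assume "r < length [1::nat,2,3]" "s < length [1::nat,2,3]"
      then have "r = 0 \<or> r = 1 \<or> r = 2" "s = 0 \<or> s = 1 \<or> s = 2" by auto
      then show "(q ! r < q ! s \<longleftrightarrow> [1::nat,2,3] ! r < [1::nat,2,3] ! s) \<and>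
         (q ! r > q ! s \<longleftrightarrow> [1::nat,2,3] ! r > [1::nat,2,3] ! s)"
        using q by (elim disjE) auto
    qed
  qed
qed

lemma single_subseqs: "z \<in> set w \<Longrightarrow> [z] \<in> set (subseqs w)"
  by (induction w) (auto simp: Let_def nil_subseqs)

lemma L3a:
  assumes "\<forall>z\<in>set w. z \<le> m" "contains (u#m#w) [1,2,3]"
  shows "contains (u#w) [1,2,3]"
proof -
  obtain q where q: "q \<in> set (subseqs (u#m#w))" "iso q [1,2,3]" using assms(2) contains_subseqs by blast
  obtain a b c where abc: "q = [a,b,c]" "a < b" "b < c" using q(2) iso123 by blast
  have "q \<in> set (subseqs (u#w))"
  proof -
    consider q' where "q = u#q'" "q' \<in> set (subseqs (m#w))" | "q \<in> set (subseqs (m#w))"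
      using q(1) unfolding subseqs_Cons_set by blast
    then show ?thesis
    proof cases
      case 1
      consider q'' where "q' = m#q''" "q'' \<in> set (subseqs w)" | "q' \<in> set (subseqs w)"
        using 1(2) unfolding subseqs_Cons_set by blast
      then show ?thesis
      proof cases
        case c1: 1
        then have "q'' = [c]" "b = m" using 1 abc by auto
        then have "c \<in> set w" using subseqs_set[OF c1(2)] by auto
        then show ?thesis using assms(1) abc \<open>b = m\<close> by auto
      next
        case 2
        then show ?thesis using 1(1) unfolding subseqs_Cons_set by blast
      qed
    next
      case 2
      consider q'' where "q = m#q''" "q'' \<in> set (subseqs w)" | "q \<in> set (subseqs w)"
        using 2 unfolding subseqs_Cons_set by blast
      then show ?thesis
      proof cases
        case 1
        then have "q'' = [b,c]" "a = m" using abc by auto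
        then have "b \<in> set w" using subseqs_set[OF 1(2)] by auto
        then show ?thesis using assms(1) abc \<open>a = m\<close> by auto
      next
        case 2
        then show ?thesis by (rule subseqs_mono_Cons)
      qed
    qed
  qed
  then show ?thesis using q(2) contains_subseqs by blast
qed

lemma L4:
  assumes "u < x" "x < z" "z \<in> set w"
  shows "contains (u#x#w) [1,2,3]"
proof -
  have "[x,z] \<in> set (subseqs (x#w))" using single_subseqs[OF assms(3)] unfolding subseqs_Cons_set by blast
  then have "[u,x,z] \<in> set (subseqs (u#x#w))" unfolding subseqs_Cons_set[of u] by blast
  moreover have "iso [u,x,z] [1,2,3]" using iso123 assms by blast
  ultimately show ?thesis using contains_subseqs by blast
qed

lemma L5:
  assumes "\<not> contains (i#v) [1,2,3]" "sorted_wrt (>) ds" "set ds \<subseteq> set v" "\<forall>d\<in>set ds. i < d"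
  shows "ds \<in> set (subseqs v)"
  using assms
proof (induction v arbitrary: ds)
  case Nil
  then show ?case by simp
next
  case (Cons x v)
  have H1: "\<not> contains (i#v) [1,2,3]" using Cons.prems(1) L1b by blast
  have H2: "\<not> (i < x \<and> x < z)" if "z \<in> set v" for z using Cons.prems(1) L4 that by blast
  show ?case
  proof (cases ds)
    case Nil
    then show ?thesis using nil_subseqs[of "x#v"] by simp
  next
    case (Cons d ds')
    show ?thesis
    proof (cases "d = x")
      case True
      have "set ds' \<subseteq> set v" using Cons.prems(2,3) \<open>ds = d#ds'\<close> True by auto
      then have "ds' \<in> set (subseqs v)" using Cons.IH[OF H1] Cons.prems(2,4) \<open>ds = d#ds'\<close> by auto
      then show ?thesis using \<open>ds = d#ds'\<close> True unfolding subseqs_Cons_set by blast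
    next
      case False
      have "x \<notin> set ds"
      proof
        assume "x \<in> set ds"
        then have "x \<in> set ds'" using False \<open>ds = d#ds'\<close> by auto
        then have "x < d" "i < x" using Cons.prems(2,4) \<open>ds = d#ds'\<close> by auto
        moreover have "d \<in> set v" using Cons.prems(3) \<open>ds = d#ds'\<close> False by auto
        ultimately show False using H2 by blast
      qed
      then have "set ds \<subseteq> set v" using Cons.prems(3) by auto
      then have "ds \<in> set (subseqs v)" using Cons.IH[OF H1] Cons.prems(2,4) by auto
      then show ?thesis by (rule subseqs_mono_Cons)
    qed
  qed
qed

lemma pat_len: "k \<ge> 1 \<Longrightarrow> length (pat_1k k) = k"
  by (simp add: pat_1k_def) arith

lemma pat_0: "pat_1k k ! 0 = 1"
  by (simp add: pat_1k_def)

lemma pat_s: "0 < s \<Longrightarrow> s < k \<Longrightarrow> pat_1k k ! s = k + 1 - s"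
  by (simp add: pat_1k_def nth_Cons' rev_nth nth_upt) arith

lemma pat_first_min: "k \<ge> 1 \<Longrightarrow> \<forall>s. 0 < s \<and> s < length (pat_1k k) \<longrightarrow> pat_1k k ! 0 < pat_1k k ! s"
proof (intro allI impI)
  fix s assume "k \<ge> 1" "0 < s \<and> s < length (pat_1k k)"
  then have "0 < s" "s < k" using pat_len by auto
  then show "pat_1k k ! 0 < pat_1k k ! s" using pat_s[of s k] pat_0[of k] by simp
qed

lemma first_min_123: "\<forall>s. 0 < s \<and> s < length [1::nat,2,3] \<longrightarrow> [1::nat,2,3] ! 0 < [1::nat,2,3] ! s"
  by (auto simp: nth_Cons')

lemma L7_nth: "0 < s \<Longrightarrow> s < k \<Longrightarrow> (i # rev [c0..<c0+k-1]) ! s = c0 + k - 1 - s"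
  by (simp add: nth_Cons' rev_nth nth_upt)

lemma L7:
  assumes "k \<ge> 3" "i < c0"
  shows "iso (i # rev [c0..<c0+k-1]) (pat_1k k)"
  unfolding iso_def
proof (rule conjI)
  show "length (i # rev [c0..<c0+k-1]) = length (pat_1k k)" using assms by (simp add: pat_len)
  show "\<forall>r<length (pat_1k k). \<forall>s<length (pat_1k k).
    ((i # rev [c0..<c0+k-1]) ! r < (i # rev [c0..<c0+k-1]) ! s \<longleftrightarrow> pat_1k k ! r < pat_1k k ! s) \<and>
    ((i # rev [c0..<c0+k-1]) ! r > (i # rev [c0..<c0+k-1]) ! s \<longleftrightarrow> pat_1k k ! r > pat_1k k ! s)"
  proof (intro allI impI)
    fix r s assume rs: "r < length (pat_1k k)" "s < length (pat_1k k)"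
    then have rs': "r < k" "s < k" using assms pat_len by auto
    show "((i # rev [c0..<c0+k-1]) ! r < (i # rev [c0..<c0+k-1]) ! s \<longleftrightarrow> pat_1k k ! r < pat_1k k ! s) \<and>
    ((i # rev [c0..<c0+k-1]) ! r > (i # rev [c0..<c0+k-1]) ! s \<longleftrightarrow> pat_1k k ! r > pat_1k k ! s)"
    proof (cases "r = 0")
      case True
      show ?thesis
      proof (cases "s = 0")
        case True with \<open>r = 0\<close> show ?thesis by simp
      next
        case False
        have e: "(i # rev [c0..<c0+k-1]) ! s = c0 + k - 1 - s" "pat_1k k ! s = k + 1 - s"
          using False L7_nth[OF _ rs'(2), of i c0] pat_s[OF _ rs'(2)] by auto
        show ?thesis unfolding \<open>r = 0\<close> e pat_0 nth_Cons_0 using rs' assms by arith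
      qed
    next
      case False
      show ?thesis
      proof (cases "s = 0")
        case True
        have e: "(i # rev [c0..<c0+k-1]) ! r = c0 + k - 1 - r" "pat_1k k ! r = k + 1 - r"
          using \<open>r \<noteq> 0\<close> L7_nth[OF _ rs'(1), of i c0] pat_s[OF _ rs'(1)] by auto
        show ?thesis unfolding True e pat_0 nth_Cons_0 using rs' assms by arith
      next
        case False
        have e: "(i # rev [c0..<c0+k-1]) ! r = c0 + k - 1 - r" "pat_1k k ! r = k + 1 - r"
             "(i # rev [c0..<c0+k-1]) ! s = c0 + k - 1 - s" "pat_1k k ! s = k + 1 - s"
          using \<open>r \<noteq> 0\<close> False L7_nth[OF _ rs'(1), of i c0] pat_s[OF _ rs'(1)]
           L7_nth[OF _ rs'(2), of i c0] pat_s[OF _ rs'(2)] by auto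
        show ?thesis unfolding e using rs' assms by arith
      qed
    qed
  qed
qed


lemma L3b:
  assumes k3: "k \<ge> 3" and um: "u < m" and mk: "m + 2 \<le> u + k" and wm: "\<forall>z\<in>set w. z \<le> m"
    and c: "contains (u#m#w) (pat_1k k)"
  shows "contains (u#w) (pat_1k k)"
proof -
  let ?p = "pat_1k k"
  obtain q where q: "q \<in> set (subseqs (u#m#w))" "iso q ?p" using c contains_subseqs by blast
  have lp: "length ?p = k" using k3 pat_len by auto
  have lq: "length q = k" using iso_len[OF q(2)] lp by simp
  have F0: "q!0 < q!s" if "0 < s" "s < k" for s
  proof -
    have "?p!0 < ?p!s" using pat_first_min[of k] k3 lp that by auto
    then show ?thesis using iso_at[OF q(2), of 0 s] lp that by auto
  qed
  have F1: "q!s < q!1" if "1 < s" "s < k" for s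
  proof -
    have "?p!s < ?p!1" using pat_s[of s k] pat_s[of 1 k] that by auto
    then show ?thesis using iso_at[OF q(2), of s 1] lp that by auto
  qed
  have F2: "q!r \<noteq> q!s" if "1 < r" "r < k" "1 < s" "s < k" "r \<noteq> s" for r s
  proof -
    have "?p!r \<noteq> ?p!s" using pat_s[of s k] pat_s[of r k] that by auto
    then show ?thesis using iso_at[OF q(2), of r s] lp that by auto
  qed
  have "q \<in> set (subseqs (u#w))"
  proof -
    consider q' where "q = u#q'" "q' \<in> set (subseqs (m#w))" | "q \<in> set (subseqs (m#w))"
      using q(1) unfolding subseqs_Cons_set by blast
    then show ?thesis
    proof cases
      case 1
      consider q'' where "q' = m#q''" "q'' \<in> set (subseqs w)" | "q' \<in> set (subseqs w)"
        using 1(2) unfolding subseqs_Cons_set by blast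
      then show ?thesis
      proof cases
        case c1: 1
        have qq: "q = u # m # q''" using 1 c1 by simp
        have lq'': "length q'' = k - 2" using lq qq by simp
        have dist: "distinct q''"
          unfolding distinct_conv_nth
        proof (intro allI impI)
          fix i j assume "i < length q''" "j < length q''" "i \<noteq> j"
          then have "q!(i+2) \<noteq> q!(j+2)" using F2[of "i+2" "j+2"] lq'' k3 by auto
          then show "q''!i \<noteq> q''!j" using qq by simp
        qed
        have sub: "set q'' \<subseteq> {u<..<m}"
        proof
          fix z assume "z \<in> set q''"
          then obtain i where i: "i < length q''" "z = q''!i" by (metis in_set_conv_nth)
          have "q!0 < q!(i+2)" "q!(i+2) < q!1" using F0[of "i+2"] F1[of "i+2"] i lq'' k3 by auto
          then show "z \<in> {u<..<m}" using qq i by simp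
        qed
        have "card (set q'') = k - 2" using distinct_card[OF dist] lq'' by simp
        moreover have "card (set q'') \<le> card {u<..<m}" using sub by (intro card_mono) auto
        ultimately have "k - 2 \<le> m - Suc u" by simp
        then show ?thesis using mk um k3 by arith
      next
        case 2
        then show ?thesis using 1(1) unfolding subseqs_Cons_set by blast
      qed
    next
      case 2
      consider q'' where "q = m#q''" "q'' \<in> set (subseqs w)" | "q \<in> set (subseqs w)"
        using 2 unfolding subseqs_Cons_set by blast
      then show ?thesis
      proof cases
        case 1
        have "q!0 < q!1" using F0[of 1] k3 by auto
        moreover have "q!1 \<in> set w"
        proof -
          have "length q'' = k - 1" using lq 1 by simp
          then have "q''!0 \<in> set q''" using k3 by auto
          then show ?thesis using subseqs_set[OF 1(2)] 1 by auto
        qed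
        ultimately show ?thesis using wm 1 by auto
      next
        case 2
        then show ?thesis by (rule subseqs_mono_Cons)
      qed
    qed
  qed
  then show ?thesis using q(2) contains_subseqs by blast
qed



lemma mult_zero: "mult r a b L c \<ge> 1 \<Longrightarrow> 1 \<le> c \<and> c \<le> a + 1 + length L"
  unfolding mult_def by (auto split: if_splits)

lemma mult_pos:
  assumes "r \<ge> 1" "b \<ge> 1" "\<forall>l\<in>set L. l > 0" "1 \<le> c" "c \<le> a + 1 + length L"
  shows "mult r a b L c \<ge> 1"
proof (cases "a + 2 \<le> c")
  case True
  have "L ! (c - (a + 2)) \<in> set L" using assms(5) True by (intro nth_mem) arith
  then have "L ! (c - (a + 2)) \<ge> 1" using assms(3) by (simp add: Suc_le_eq)
  moreover have "mult r a b L c = L ! (c - (a + 2))" using assms(5) True unfolding mult_def by auto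
  ultimately show ?thesis by simp
next
  case False
  then show ?thesis using assms unfolding mult_def by auto
qed

lemma M1:
  assumes "1 \<le> i" "i \<le> a"
  shows "mult r (i-1) (r-1) (replicate (a-i) r @ b # L) c = mult r a b L c - (if c = i then 1 else 0)"
proof -
  consider "c = 0" | "1 \<le> c \<and> c < i" | "c = i" | "i < c \<and> c \<le> a" | "c = a + 1"
    | "a + 2 \<le> c \<and> c \<le> a + 1 + length L" | "a + 1 + length L < c" by linarith
  then show ?thesis
  proof cases
    case 4
    then have "c - (i - 1 + 2) < a - i" using assms by arith
    then have "(replicate (a-i) r @ b # L) ! (c - (i - 1 + 2)) = r"
      by (simp add: nth_append)
    then show ?thesis using 4 assms unfolding mult_def by auto
  next
    case 5
    then have "c - (i - 1 + 2) = a - i" using assms by arith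
    then have "(replicate (a-i) r @ b # L) ! (c - (i - 1 + 2)) = b"
      by (simp add: nth_append)
    then show ?thesis using 5 assms unfolding mult_def by auto
  next
    case 6
    then have idx: "c - (i - 1 + 2) = (a - i) + Suc (c - (a + 2))" using assms by arith
    have "(replicate (a-i) r @ b # L) ! ((a - i) + Suc (c - (a + 2))) = L ! (c - (a + 2))"
      by (simp add: nth_append)
    then have "(replicate (a-i) r @ b # L) ! (c - (i - 1 + 2)) = L ! (c - (a + 2))"
      unfolding idx .
    then show ?thesis using 6 assms unfolding mult_def by auto
  qed (use assms in \<open>auto simp: mult_def\<close>)
qed

lemma M1i: "1 \<le> i \<Longrightarrow> i \<le> a \<Longrightarrow> mult r a b L i = r"
  by (simp add: mult_def)

lemma M2: "mult r a (b-1) L c = mult r a b L c - (if c = a + 1 then 1 else 0)"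
  by (simp add: mult_def)

lemma M2i: "mult r a b L (a+1) = b"
  by (simp add: mult_def)

lemma M3:
  assumes "L \<noteq> []" "\<forall>l\<in>set L. l > 0"
  shows "mult r a b (Rdel (butlast L @ [last L - 1])) c = mult r a b L c - (if c = a + 1 + length L then 1 else 0)"
proof -
  obtain L0 l where L: "L = L0 @ [l]" using assms(1) by (metis append_butlast_last_id)
  have l0: "l > 0" "\<forall>x\<in>set L0. x > 0" using assms(2) L by auto
  have f: "filter (\<lambda>x. x \<noteq> 0) L0 = L0" using l0(2) by (induction L0) auto
  show ?thesis
  proof (cases "l = 1")
    case True
    then have R: "Rdel (butlast L @ [last L - 1]) = L0" using L f by (simp add: Rdel_def)
    show ?thesis unfolding R unfolding L mult_def using True by (auto simp: nth_append)
  next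
    case False
    then have R: "Rdel (butlast L @ [last L - 1]) = L0 @ [l - 1]" using L f l0 by (simp add: Rdel_def)
    show ?thesis unfolding R unfolding L mult_def using False by (auto simp: nth_append)
  qed
qed

lemma M3i: "L \<noteq> [] \<Longrightarrow> mult r a b L (a + 1 + length L) = last L"
  by (cases L) (auto simp: mult_def last_conv_nth)

lemma cnt_iff:
  assumes "M x \<ge> 1"
  shows "(\<forall>c. count_list (x#w) c = M c) \<longleftrightarrow> (\<forall>c. count_list w c = M c - (if c = x then 1 else 0))"
proof
  assume h: "\<forall>c. count_list (x#w) c = M c"
  show "\<forall>c. count_list w c = M c - (if c = x then 1 else 0)"
  proof
    fix c show "count_list w c = M c - (if c = x then 1 else 0)" using h[rule_format, of c] by auto
  qed
next
  assume h: "\<forall>c. count_list w c = M c - (if c = x then 1 else 0)"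
  show "\<forall>c. count_list (x#w) c = M c"
  proof
    fix c show "count_list (x#w) c = M c" using h[rule_format, of c] assms by auto
  qed
qed



definition av :: "nat \<Rightarrow> nat list \<Rightarrow> bool" where
  "av k w \<longleftrightarrow> avoids w [1,2,3] \<and> avoids w (pat_1k k)"

lemma good_iff: "w \<in> good_words k r a b L \<longleftrightarrow>
   (\<forall>c. count_list w c = mult r a b L c) \<and> av k w \<and> av k ((a+1)#w)"
  by (auto simp: good_words_def av_def)

lemma av_L1: "av k (x#w) \<Longrightarrow> av k w"
  unfolding av_def avoids_def using L1 by blast

lemma av_L1b: "av k (u#m#w) \<Longrightarrow> av k (u#w)"
  unfolding av_def avoids_def using L1b by blast

lemma av_L2: assumes "k \<ge> 1" "y \<le> x" "av k (y#w)" shows "av k (x#y#w)"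
  using assms L2[OF first_min_123, of y x w] L2[OF pat_first_min[OF assms(1)], of y x w]
  unfolding av_def avoids_def by blast

lemma av_L3: assumes "k \<ge> 3" "u < m" "m + 2 \<le> u + k" "\<forall>z\<in>set w. z \<le> m" "av k (u#w)"
  shows "av k (u#m#w)"
  using assms L3a[OF assms(4), of u] L3b[OF assms(1-4)] unfolding av_def avoids_def by blast

lemma len_sum: "set (w::nat list) \<subseteq> {..<N} \<Longrightarrow> length w = (\<Sum>c<N. count_list w c)"
proof (induction w)
  case Nil
  then show ?case by simp
next
  case (Cons x w)
  have "(\<Sum>c<N. count_list (x#w) c) = (\<Sum>c<N. count_list w c + (if x = c then 1 else 0))"
    by (intro sum.cong) auto
  also have "\<dots> = (\<Sum>c<N. count_list w c) + (\<Sum>c<N. (if x = c then 1 else 0))"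
    by (rule sum.distrib)
  also have "\<dots> = length w + 1"
  proof -
    have "(\<Sum>c<N. (if x = c then 1 else 0::nat)) = 1"
      using Cons.prems by (subst sum.delta') auto
    then show ?thesis using Cons by simp
  qed
  finally show ?case by simp
qed

lemma fin_good: "finite (good_words k r a b L)"
proof -
  define N where "N = a + 2 + length L"
  define n where "n = (\<Sum>c<N. mult r a b L c)"
  have "good_words k r a b L \<subseteq> {w. set w \<subseteq> {..<N} \<and> length w = n}"
  proof
    fix w assume "w \<in> good_words k r a b L"
    then have cnt: "\<forall>c. count_list w c = mult r a b L c" using good_iff by blast
    have s: "set w \<subseteq> {..<N}"
    proof
      fix z assume "z \<in> set w"
      then have "count_list w z \<ge> 1" using count_list_0_iff[of w z] by linarith
      then have "mult r a b L z \<ge> 1" using cnt by simp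
      then show "z \<in> {..<N}" using mult_zero N_def by fastforce
    qed
    moreover have "length w = n" using len_sum[OF s] cnt n_def by simp
    ultimately show "w \<in> {w. set w \<subseteq> {..<N} \<and> length w = n}" by simp
  qed
  moreover have "finite {w. set w \<subseteq> {..<N} \<and> length w = n}"
    by (rule finite_lists_length_eq) simp
  ultimately show ?thesis by (rule finite_subset)
qed

lemma E2:
  assumes "b \<ge> 1" "k \<ge> 1"
  shows "(a+1)#w \<in> good_words k r a b L \<longleftrightarrow> w \<in> good_words k r a (b-1) L"
proof -
  have c: "(\<forall>c. count_list ((a+1)#w) c = mult r a b L c) \<longleftrightarrow> (\<forall>c. count_list w c = mult r a (b-1) L c)"
    using cnt_iff[of "mult r a b L" "a+1" w] M2i[of r a b L] M2[of r a b L] assms by simp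
  have "av k ((a+1)#w) \<and> av k ((a+1)#(a+1)#w) \<longleftrightarrow> av k w \<and> av k ((a+1)#w)"
    using av_L1[of k "a+1" w] av_L1[of k "a+1" "(a+1)#w"] av_L2[OF assms(2), of "a+1" "a+1" w] by blast
  then show ?thesis using c good_iff by blast
qed

lemma E1:
  assumes "1 \<le> i" "i \<le> a" "r \<ge> 1" "k \<ge> 1"
  shows "i#w \<in> good_words k r a b L \<longleftrightarrow> w \<in> good_words k r (i-1) (r-1) (replicate (a-i) r @ b # L)"
proof -
  have c: "(\<forall>c. count_list (i#w) c = mult r a b L c) \<longleftrightarrow>
      (\<forall>c. count_list w c = mult r (i-1) (r-1) (replicate (a-i) r @ b # L) c)"
    using cnt_iff[of "mult r a b L" i w] M1i[OF assms(1,2), of r b L] M1[OF assms(1,2), of r b L] assms(3) by simp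
  have ii: "i - 1 + 1 = i" using assms(1) by simp
  have "av k (i#w) \<and> av k ((a+1)#i#w) \<longleftrightarrow> av k w \<and> av k (i#w)"
    using av_L1[of k i w] av_L2[OF assms(4), of i "a+1" w] assms(2) by auto
  then show ?thesis using c good_iff[of w k r "i-1"] good_iff[of "i#w" k r a] ii by auto
qed


lemma cnt_set: "\<forall>c. count_list (x#w) c = M c \<Longrightarrow> z \<in> set w \<Longrightarrow> M z \<ge> 1"
proof -
  assume h: "\<forall>c. count_list (x#w) c = M c" and z: "z \<in> set w"
  have "count_list w z \<ge> 1" using z count_list_0_iff[of w z] by linarith
  moreover have "count_list w z \<le> count_list (x#w) z" by simp
  ultimately show "M z \<ge> 1" using h by (metis order_trans)
qed

lemma E3:
  assumes L: "L \<noteq> []" "\<forall>l\<in>set L. l>0" and k: "k \<ge> 3" "length L + 2 \<le> k"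
  shows "(a+1+length L)#w \<in> good_words k r a b L \<longleftrightarrow>
     w \<in> good_words k r a b (Rdel (butlast L @ [last L - 1]))"
proof -
  let ?m = "a+1+length L"
  have lastpos: "last L \<ge> 1" using L last_in_set[OF L(1)] by (simp add: Suc_le_eq)
  have c: "(\<forall>c. count_list (?m#w) c = mult r a b L c) \<longleftrightarrow>
     (\<forall>c. count_list w c = mult r a b (Rdel (butlast L @ [last L - 1])) c)"
    using cnt_iff[of "mult r a b L" ?m w] M3i[OF L(1), of r a b] M3[OF L, of r a b] lastpos by simp
  have bound: "\<forall>z\<in>set w. z \<le> ?m" if h: "\<forall>c. count_list (?m#w) c = mult r a b L c"
  proof
    fix z assume "z \<in> set w"
    then have "mult r a b L z \<ge> 1" using cnt_set[OF h] by blast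
    then show "z \<le> ?m" using mult_zero by blast
  qed
  have lt: "a + 1 < ?m" using L(1) by simp
  have avq: "av k (?m#w) \<and> av k ((a+1)#?m#w) \<longleftrightarrow> av k w \<and> av k ((a+1)#w)"
    if "\<forall>z\<in>set w. z \<le> ?m"
    using av_L1[of k ?m w] av_L1b[of k "a+1" ?m w] av_L1[of k "a+1" "?m#w"]
      av_L3[OF k(1) lt _ that] k(2) by force
  show ?thesis
  proof
    assume "?m#w \<in> good_words k r a b L"
    then have h: "\<forall>c. count_list (?m#w) c = mult r a b L c" "av k (?m#w)" "av k ((a+1)#?m#w)"
      using good_iff by blast+
    then show "w \<in> good_words k r a b (Rdel (butlast L @ [last L - 1]))"
      using c avq[OF bound[OF h(1)]] good_iff by blast
  next
    assume "w \<in> good_words k r a b (Rdel (butlast L @ [last L - 1]))"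
    then have h: "\<forall>c. count_list w c = mult r a b (Rdel (butlast L @ [last L - 1])) c" "av k w" "av k ((a+1)#w)"
      using good_iff by blast+
    then have h1: "\<forall>c. count_list (?m#w) c = mult r a b L c" using c by blast
    then show "?m#w \<in> good_words k r a b L"
      using h avq[OF bound[OF h1]] good_iff by blast
  qed
qed

lemma E4:
  assumes g: "x#w \<in> good_words k r a b L" and L: "\<forall>l\<in>set L. l>0" and x: "a+2 \<le> x"
  shows "x = a+1+length L"
proof -
  have cnt: "\<forall>c. count_list (x#w) c = mult r a b L c" "av k ((a+1)#x#w)" using g good_iff by blast+
  have "mult r a b L x \<ge> 1" using cnt(1)[rule_format, of x] by simp
  then have xle: "x \<le> a+1+length L" using mult_zero by blast
  show ?thesis
  proof (rule ccontr)
    assume "x \<noteq> a+1+length L"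
    then have xl: "x < a+1+length L" using xle by simp
    then have Lne: "L \<noteq> []" using x by auto
    have "last L \<ge> 1" using L last_in_set[OF Lne] by (simp add: Suc_le_eq)
    then have "count_list (x#w) (a+1+length L) \<ge> 1" using cnt(1) M3i[OF Lne, of r a b] by simp
    then have "count_list w (a+1+length L) \<ge> 1" using xl by simp
    then have "a+1+length L \<in> set w" using count_list_0_iff[of w] by (metis not_one_le_zero)
    then have "contains ((a+1)#x#w) [1,2,3]" using L4[of "a+1" x] x xl by simp
    then show False using cnt(2) unfolding av_def avoids_def by blast
  qed
qed

lemma E1lb:
  assumes g: "x#w \<in> good_words k r a b L" and x: "1 \<le> x" "x \<le> a"
    and pos: "r \<ge> 1" "b \<ge> 1" "\<forall>l\<in>set L. l>0" and k: "k \<ge> 3"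
  shows "a + length L + 3 \<le> x + k"
proof (rule ccontr)
  assume "\<not> a + length L + 3 \<le> x + k"
  then have lt: "x + k < a + length L + 3" by simp
  define c0 where "c0 = a + length L + 3 - k"
  define ds where "ds = rev [c0..<c0+k-1]"
  have c0k: "c0 + k - 1 = a + length L + 2" using lt k c0_def by arith
  have xc0: "x < c0" using lt c0_def by arith
  have cnt: "\<forall>c. count_list (x#w) c = mult r a b L c" "av k (x#w)" using g good_iff by blast+
  have inw: "set ds \<subseteq> set w"
  proof
    fix d assume "d \<in> set ds"
    then have d: "c0 \<le> d" "d < a + length L + 2" using c0k ds_def by auto
    then have "mult r a b L d \<ge> 1" using mult_pos[OF pos(1,2,3)] xc0 x by simp
    then have "count_list (x#w) d \<ge> 1" using cnt(1) by simp
    moreover have "d \<noteq> x" using d xc0 by simp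
    ultimately have "count_list w d \<ge> 1" by simp
    then show "d \<in> set w" using count_list_0_iff[of w] by (metis not_one_le_zero)
  qed
  have sorted: "sorted_wrt (>) ds" unfolding ds_def by (simp add: sorted_wrt_rev)
  have gt: "\<forall>d\<in>set ds. x < d" using xc0 ds_def by auto
  have n123: "\<not> contains (x#w) [1,2,3]" using cnt(2) unfolding av_def avoids_def by blast
  have "ds \<in> set (subseqs w)" using L5[OF n123 sorted inw gt] .
  then have "x#ds \<in> set (subseqs (x#w))" unfolding subseqs_Cons_set by blast
  moreover have "iso (x#ds) (pat_1k k)" unfolding ds_def using L7[OF k xc0] .
  ultimately have "contains (x#w) (pat_1k k)" using contains_subseqs by blast
  then show False using cnt(2) unfolding av_def avoids_def by blast
qed



lemma card_Cons_img: "card (Cons x ` S) = card S"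
  by (rule card_image) (simp add: inj_on_def)

theorem theorem2:
  fixes k r a b :: nat and L :: "nat list"
  assumes "k \<ge> 3" and "r \<ge> 1"
    and "b \<ge> 1" and "b \<le> r"
    and "\<forall>l\<in>set L. l > 0"
    and "length L \<le> k - 2"
  shows "A k r a b L =
     (\<Sum>i = max 1 (a + length L + 1 - (k - 2))..a.
         A k r (i - 1) (r - 1) (replicate (a - i) r @ b # L))
     + A k r a (b - 1) L
     + (if length L \<ge> 1 then A k r a b (Rdel (butlast L @ [last L - 1])) else 0)"
proof -
  note k3 = assms(1) and r1 = assms(2) and b1 = assms(3) and Lpos = assms(5)
  define t where "t = length L"
  define lo where "lo = max 1 (a + length L + 1 - (k - 2))"
  define L3 where "L3 = Rdel (butlast L @ [last L - 1])"
  define G where "G = good_words k r"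
  define F where "F i = Cons i ` G (i-1) (r-1) (replicate (a - i) r @ b # L)" for i
  define S1 where "S1 = (\<Union>i\<in>{lo..a}. F i)"
  define S2 where "S2 = Cons (a+1) ` G a (b-1) L"
  define S3 where "S3 = (if 1 \<le> t then Cons (a+1+t) ` G a b L3 else {})"
  have kt: "t + 2 \<le> k" using assms(6) k3 t_def by arith
  have eq: "G a b L = S1 \<union> S2 \<union> S3"
  proof
    show "G a b L \<subseteq> S1 \<union> S2 \<union> S3"
    proof
      fix w assume wG: "w \<in> G a b L"
      then have cnt: "\<forall>c. count_list w c = mult r a b L c" using good_iff G_def by blast
      have "w \<noteq> []" using cnt[rule_format, of "a+1"] M2i[of r a b L] b1 by auto
      then obtain x w' where w: "w = x#w'" by (cases w) auto
      have "mult r a b L x \<ge> 1" using cnt[rule_format, of x] w by simp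
      then have x: "1 \<le> x" "x \<le> a + 1 + t" using mult_zero t_def by blast+
      have g: "x#w' \<in> good_words k r a b L" using wG w G_def by simp
      consider "x \<le> a" | "x = a + 1" | "a + 2 \<le> x" by linarith
      then show "w \<in> S1 \<union> S2 \<union> S3"
      proof cases
        case 1
        have "a + length L + 3 \<le> x + k" using E1lb[OF g x(1) 1 r1 b1 Lpos k3] .
        then have "lo \<le> x" using lo_def x(1) k3 by arith
        moreover have "w' \<in> G (x-1) (r-1) (replicate (a - x) r @ b # L)"
          using E1[OF x(1) 1 r1, of k w' b L] g k3 G_def by simp
        ultimately have "w \<in> F x" "x \<in> {lo..a}" using w F_def 1 by auto
        then show ?thesis using S1_def by blast
      next
        case 2
        then have "w' \<in> G a (b-1) L" using E2[OF b1, of k a w' r L] g k3 G_def by simp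
        then show ?thesis using w 2 S2_def by auto
      next
        case 3
        have xe: "x = a + 1 + t" using E4[OF g Lpos 3] t_def by simp
        then have t1: "1 \<le> t" using 3 by simp
        then have "L \<noteq> []" using t_def by auto
        then have "w' \<in> G a b L3" using E3[OF _ Lpos k3, of a w' r b] kt g xe t_def L3_def G_def by simp
        then show ?thesis using w xe t1 S3_def by auto
      qed
    qed
  next
    show "S1 \<union> S2 \<union> S3 \<subseteq> G a b L"
    proof -
      have "S1 \<subseteq> G a b L"
      proof
        fix w assume "w \<in> S1"
        then obtain i w' where i: "i \<in> {lo..a}" "w = i#w'" "w' \<in> G (i-1) (r-1) (replicate (a - i) r @ b # L)"
          using S1_def F_def by auto
        have "1 \<le> i" "i \<le> a" using i(1) lo_def by auto
        then show "w \<in> G a b L" using E1[of i a r k w' b L] i k3 r1 G_def by simp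
      qed
      moreover have "S2 \<subseteq> G a b L"
        using E2[OF b1, of k a _ r L] k3 S2_def G_def by auto
      moreover have "S3 \<subseteq> G a b L"
      proof
        fix w assume w: "w \<in> S3"
        then have t1: "1 \<le> t" using S3_def by (simp split: if_splits)
        then obtain w' where w': "w = (a+1+t)#w'" "w' \<in> G a b L3" using w S3_def by auto
        have "L \<noteq> []" using t1 t_def by auto
        then show "w \<in> G a b L" using E3[OF _ Lpos k3, of a w' r b] kt w' t_def L3_def G_def by simp
      qed
      ultimately show ?thesis by blast
    qed
  qed
  have finG: "finite (G a' b' L')" for a' b' L' using fin_good G_def by simp
  have finS1: "finite S1" using S1_def F_def finG by auto
  have finS2: "finite S2" using S2_def finG by auto
  have finS3: "finite S3" using S3_def finG by auto
  have d12: "S1 \<inter> S2 = {}" using S1_def S2_def F_def by auto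
  have d3: "(S1 \<union> S2) \<inter> S3 = {}" using S1_def S2_def S3_def F_def by auto
  have cS1: "card S1 = (\<Sum>i\<in>{lo..a}. card (F i))"
    unfolding S1_def
  proof (rule card_UN_disjoint)
    show "finite {lo..a}" by simp
    show "\<forall>i\<in>{lo..a}. finite (F i)" using F_def finG by auto
    show "\<forall>i\<in>{lo..a}. \<forall>j\<in>{lo..a}. i \<noteq> j \<longrightarrow> F i \<inter> F j = {}" using F_def by auto
  qed
  have cF: "card (F i) = A k r (i - 1) (r - 1) (replicate (a - i) r @ b # L)" for i
    using F_def G_def A_def card_Cons_img by simp
  have cS2: "card S2 = A k r a (b - 1) L" using S2_def G_def A_def card_Cons_img by simp
  have cS3: "card S3 = (if length L \<ge> 1 then A k r a b (Rdel (butlast L @ [last L - 1])) else 0)"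
    unfolding S3_def G_def A_def t_def L3_def by (simp add: card_Cons_img)
  have "A k r a b L = card (S1 \<union> S2 \<union> S3)" using eq A_def G_def by simp
  also have "\<dots> = card S1 + card S2 + card S3"
    using card_Un_disjoint[OF _ finS3 d3] card_Un_disjoint[OF finS1 finS2 d12] finS1 finS2 by simp
  finally show ?thesis using cS1 cF cS2 cS3 lo_def by simp
qed


end
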